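(* Let $G\subseteq\mathrm{GL}_n(\mathbb{R})$ be a finite group and $H$ a normal subgroup of $G$. Assume: (1) there are $g_1,\dots,g_k\in\mathbb{R}[\underline{X}]^G$ such that a ring homomorphism $\varphi_G:\mathbb{R}[\underline{X}]^G\to\mathbb{R}$ extends to a ring homomorphism $\mathbb{R}[\underline{X}]^H\to\mathbb{R}$ if and only if $\varphi_G(g_1)\ge0,\dots,\varphi_G(g_k)\ge0$; (2) there is $h\in\mathbb{R}[\underline{X}]^H$ such that a ring homomorphism $\varphi_H:\mathbb{R}[\underline{X}]^H\to\mathbb{R}$ extends to a ring homomorphism $\mathbb{R}[\underline{X}]\to\mathbb{R}$ if and only if $\varphi_H(h)\ge0$. Then a ring homomorphism $\varphi_G:\mathbb{R}[\underline{X}]^G\to\mathbb{R}$ extends to a ring homomorphism $\varphi:\mathbb{R}[\underline{X}]\to\mathbb{R}$ if and only if $\varphi_G(\mathcal{R}_G(h))\ge0$, $\varphi_G(g_1)\ge0,\dots,\varphi_G(g_k)\ge0$.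
   Context: $\mathbb{R}[\underline{X}]=\mathbb{R}[X_1,\dots,X_n]$ with $G$ acting by $h^\sigma(x)=h(\sigma^{-1}x)$; $\mathbb{R}[\underline{X}]^K$ is the ring of $K$-invariant polynomials; $\mathcal{R}_G(h)=\frac{1}{|G|}\sum_{\sigma\in G}h^\sigma$ is the Reynolds operator. *)

theory Defs
  imports "HOL-Analysis.Analysis"
begin

text \<open>The polynomial ring R[X_1,...,X_n] is represented by the ring of polynomial
  functions on R^n (isomorphic to the polynomial ring since R is infinite).\<close>
inductive_set polyfun :: "(real^'n \<Rightarrow> real) set" where
  const: "(\<lambda>x. c) \<in> polyfun"
| coord: "(\<lambda>x. x $ i) \<in> polyfun"
| add: "f \<in> polyfun \<Longrightarrow> g \<in> polyfun \<Longrightarrow> (\<lambda>x. f x + g x) \<in> polyfun"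
| mult: "f \<in> polyfun \<Longrightarrow> g \<in> polyfun \<Longrightarrow> (\<lambda>x. f x * g x) \<in> polyfun"

definition matrix_group :: "(real^'n^'n) set \<Rightarrow> bool" where
  "matrix_group G \<longleftrightarrow> G \<subseteq> {A. invertible A} \<and> mat 1 \<in> G
     \<and> (\<forall>A\<in>G. \<forall>B\<in>G. A ** B \<in> G) \<and> (\<forall>A\<in>G. matrix_inv A \<in> G)"

definition normal_subgroup :: "(real^'n^'n) set \<Rightarrow> (real^'n^'n) set \<Rightarrow> bool" where
  "normal_subgroup H G \<longleftrightarrow> H \<subseteq> G \<and> matrix_group H
     \<and> (\<forall>s\<in>G. \<forall>t\<in>H. s ** t ** matrix_inv s \<in> H)"

definition act :: "real^'n^'n \<Rightarrow> (real^'n \<Rightarrow> real) \<Rightarrow> (real^'n \<Rightarrow> real)" where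
  "act s f = (\<lambda>x. f (matrix_inv s *v x))"

definition inv_ring :: "(real^'n^'n) set \<Rightarrow> (real^'n \<Rightarrow> real) set" where
  "inv_ring K = {f \<in> polyfun. \<forall>s\<in>K. act s f = f}"

definition reynolds :: "(real^'n^'n) set \<Rightarrow> (real^'n \<Rightarrow> real) \<Rightarrow> (real^'n \<Rightarrow> real)" where
  "reynolds G f = (\<lambda>x. (1 / real (card G)) * (\<Sum>s\<in>G. act s f x))"

definition ring_hom_on :: "('a \<Rightarrow> real) set \<Rightarrow> (('a \<Rightarrow> real) \<Rightarrow> real) \<Rightarrow> bool" where
  "ring_hom_on A \<phi> \<longleftrightarrow> \<phi> (\<lambda>x. 1) = 1
     \<and> (\<forall>a\<in>A. \<forall>b\<in>A. \<phi> (\<lambda>x. a x + b x) = \<phi> a + \<phi> b \<and> \<phi> (\<lambda>x. a x * b x) = \<phi> a * \<phi> b)"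

definition extends_hom :: "('a \<Rightarrow> real) set \<Rightarrow> ('a \<Rightarrow> real) set \<Rightarrow> (('a \<Rightarrow> real) \<Rightarrow> real) \<Rightarrow> bool" where
  "extends_hom A B \<phi> \<longleftrightarrow> (\<exists>\<psi>. ring_hom_on B \<psi> \<and> (\<forall>a\<in>A. \<psi> a = \<phi> a))"

end

theory Submission
  imports Defs
begin

lemma inv_props:
  fixes A :: "real^'n^'n"
  assumes "invertible A"
  shows "A ** matrix_inv A = mat 1" "matrix_inv A ** A = mat 1"
proof -
  have "\<exists>A'. A ** A' = mat 1 \<and> A' ** A = mat 1" using assms unfolding invertible_def by blast
  then have "A ** matrix_inv A = mat 1 \<and> matrix_inv A ** A = mat 1"
    unfolding matrix_inv_def by (rule someI_ex)
  then show "A ** matrix_inv A = mat 1" "matrix_inv A ** A = mat 1" by auto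
qed

lemma inv_unique:
  fixes A B :: "real^'n^'n"
  assumes "invertible A" "A ** B = mat 1"
  shows "matrix_inv A = B"
proof -
  have "matrix_inv A = matrix_inv A ** (A ** B)" using assms by (simp add: matrix_mul_rid)
  also have "\<dots> = (matrix_inv A ** A) ** B" by (simp add: matrix_mul_assoc)
  also have "\<dots> = B" using inv_props[OF assms(1)] by (simp add: matrix_mul_lid)
  finally show ?thesis .
qed

lemma inv_mult:
  fixes A B :: "real^'n^'n"
  assumes "invertible A" "invertible B"
  shows "matrix_inv (A ** B) = matrix_inv B ** matrix_inv A"
proof -
  have inv: "invertible (A ** B)" using assms invertible_mult by blast
  have "(A ** B) ** (matrix_inv B ** matrix_inv A) = A ** (B ** matrix_inv B) ** matrix_inv A"
    by (simp add: matrix_mul_assoc)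
  also have "\<dots> = mat 1" using inv_props[OF assms(1)] inv_props[OF assms(2)]
    by (simp add: matrix_mul_rid)
  finally show ?thesis using inv_unique[OF inv] by blast
qed

lemma act_act:
  fixes s t :: "real^'n^'n"
  assumes "invertible s" "invertible t"
  shows "act t (act s f) = act (t ** s) f"
  unfolding act_def using inv_mult[OF assms(2,1)]
  by (simp add: matrix_vector_mul_assoc)

lemma act_one: "act (mat 1 :: real^'n^'n) f = f"
proof -
  have "matrix_inv (mat 1 :: real^'n^'n) = mat 1"
    by (rule inv_unique) (auto simp: invertible_def matrix_mul_lid)
  then show ?thesis unfolding act_def by (simp add: matrix_vector_mul_lid)
qed

definition subr :: "(real^'n \<Rightarrow> real) set \<Rightarrow> bool" where
  "subr A \<longleftrightarrow> (\<forall>c. (\<lambda>x. c) \<in> A) \<and> (\<forall>f\<in>A. \<forall>g\<in>A. (\<lambda>x. f x + g x) \<in> A \<and> (\<lambda>x. f x * g x) \<in> A)"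

lemma subr_sum:
  assumes "subr A" "finite S" "\<forall>s\<in>S. F s \<in> A"
  shows "(\<lambda>x. \<Sum>s\<in>S. F s x) \<in> A"
  using assms(2,3)
proof (induction S rule: finite_induct)
  case empty then show ?case using assms(1) unfolding subr_def by simp
next
  case (insert a S)
  then show ?case using assms(1) unfolding subr_def by simp
qed

lemma subr_polyfun: "subr polyfun"
  unfolding subr_def by (auto intro: polyfun.intros)

lemma subr_inv: "subr (inv_ring K)"
proof -
  have "(\<lambda>x. f x + g x) \<in> inv_ring K \<and> (\<lambda>x. f x * g x) \<in> inv_ring K"
    if "f \<in> inv_ring K" "g \<in> inv_ring K" for f g
  proof -
    have "\<forall>s\<in>K. \<forall>x. f (matrix_inv s *v x) = f x" "\<forall>s\<in>K. \<forall>x. g (matrix_inv s *v x) = g x"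
      using that unfolding inv_ring_def act_def by (auto simp: fun_eq_iff)
    then show ?thesis using that unfolding inv_ring_def act_def
      by (auto intro: polyfun.intros)
  qed
  then show ?thesis unfolding subr_def by (auto simp: inv_ring_def act_def intro: polyfun.intros)
qed

lemma inv_sub: "inv_ring K \<subseteq> polyfun"
  unfolding inv_ring_def by auto

lemma inv_anti: "K \<subseteq> L \<Longrightarrow> inv_ring L \<subseteq> inv_ring K"
  unfolding inv_ring_def by auto

lemma act_polyfun:
  assumes "f \<in> polyfun"
  shows "act s f \<in> polyfun"
  using assms
proof (induction f rule: polyfun.induct)
  case (const c) then show ?case by (simp add: act_def polyfun.const)
next
  case (coord i)
  have "act s (\<lambda>x. x $ i) = (\<lambda>x. \<Sum>j\<in>UNIV. matrix_inv s $ i $ j * x $ j)"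
    by (simp add: act_def matrix_vector_mult_def)
  moreover have "(\<lambda>x. \<Sum>j\<in>UNIV. matrix_inv s $ i $ j * x $ j) \<in> polyfun"
    by (rule subr_sum[OF subr_polyfun]) (auto intro: polyfun.intros)
  ultimately show ?case by simp
next
  case (add f g) then show ?case by (simp add: act_def polyfun.add)
next
  case (mult f g) then show ?case by (simp add: act_def polyfun.mult)
qed

lemma hom_zero:
  assumes "ring_hom_on A \<psi>" "(\<lambda>x. 0) \<in> A"
  shows "\<psi> (\<lambda>x. 0) = 0"
proof -
  have H: "\<forall>a\<in>A. \<forall>b\<in>A. \<psi> (\<lambda>x. a x + b x) = \<psi> a + \<psi> b"
    using assms unfolding ring_hom_on_def by blast
  have "\<psi> (\<lambda>x. (0::real) + 0) = \<psi> (\<lambda>x. 0) + \<psi> (\<lambda>x. 0)"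
    using H[rule_format, OF assms(2) assms(2)] by simp
  then show ?thesis by simp
qed

lemma hom_sum:
  assumes "ring_hom_on A \<psi>" "subr A" "finite S" "\<forall>s\<in>S. F s \<in> A"
  shows "\<psi> (\<lambda>x. \<Sum>s\<in>S. F s x) = (\<Sum>s\<in>S. \<psi> (F s))"
  using assms(3,4)
proof (induction S rule: finite_induct)
  case empty then show ?case using hom_zero[OF assms(1)] assms(2) unfolding subr_def by simp
next
  case (insert a S)
  have "(\<lambda>x. \<Sum>s\<in>S. F s x) \<in> A" using subr_sum[OF assms(2) insert(1)] insert(4) by simp
  then have "\<psi> (\<lambda>x. F a x + (\<Sum>s\<in>S. F s x)) = \<psi> (F a) + \<psi> (\<lambda>x. \<Sum>s\<in>S. F s x)"
    using assms(1) insert(4) unfolding ring_hom_on_def by auto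
  then show ?case using insert by simp
qed

lemma hom_reynolds:
  assumes "ring_hom_on A \<psi>" "subr A" "finite G" "G \<noteq> {}" "\<forall>s\<in>G. act s h \<in> A"
  shows "\<psi> (reynolds G h) = (1 / real (card G)) * (\<Sum>s\<in>G. \<psi> (act s h))"
proof -
  let ?c = "1 / real (card G)"
  have N: "card G > 0" using assms(3,4) card_gt_0_iff by blast
  have cA: "(\<lambda>x. ?c) \<in> A" using assms(2) unfolding subr_def by blast
  have a: "\<psi> (\<lambda>x. \<Sum>s\<in>G. ?c) = (\<Sum>s\<in>G. \<psi> (\<lambda>x. ?c))"
    using hom_sum[OF assms(1,2,3), of "\<lambda>s x. ?c"] cA by simp
  have b: "(\<lambda>x. \<Sum>s\<in>G. ?c) = (\<lambda>x. 1)" using N by simp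
  have c: "\<psi> (\<lambda>x. 1) = 1" using assms(1) unfolding ring_hom_on_def by simp
  have "1 = \<psi> (\<lambda>x. \<Sum>s\<in>G. ?c)" by (subst b) (rule c[symmetric])
  also have "\<dots> = (\<Sum>s\<in>G. \<psi> (\<lambda>x. ?c))" by (rule a)
  also have "\<dots> = real (card G) * \<psi> (\<lambda>x. ?c)" by simp
  finally have "1 = real (card G) * \<psi> (\<lambda>x. ?c)" .
  then have c: "\<psi> (\<lambda>x. ?c) = ?c" using N by (simp add: field_simps)
  have sA: "(\<lambda>x. \<Sum>s\<in>G. act s h x) \<in> A" using subr_sum[OF assms(2,3)] assms(5) by simp
  have "\<psi> (reynolds G h) = \<psi> (\<lambda>x. ?c) * \<psi> (\<lambda>x. \<Sum>s\<in>G. act s h x)"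
  proof -
    have M: "\<forall>a\<in>A. \<forall>b\<in>A. \<psi> (\<lambda>x. a x * b x) = \<psi> a * \<psi> b"
      using assms(1) unfolding ring_hom_on_def by blast
    show ?thesis unfolding reynolds_def using M[rule_format, OF cA sA] by simp
  qed
  then show ?thesis using c hom_sum[OF assms(1,2,3), of "\<lambda>s. act s h"] assms(5) by simp
qed

lemma grp_inv:
  assumes "matrix_group G" "s \<in> G"
  shows "invertible s" "matrix_inv s \<in> G" "invertible (matrix_inv s)"
    "matrix_inv (matrix_inv s) = s"
proof -
  show i: "invertible s" "matrix_inv s \<in> G" using assms unfolding matrix_group_def by auto
  then show i2: "invertible (matrix_inv s)" using assms unfolding matrix_group_def by auto
  show "matrix_inv (matrix_inv s) = s" by (rule inv_unique[OF i2 inv_props(2)[OF i(1)]])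
qed

lemma act_normal:
  assumes "matrix_group G" "normal_subgroup H G" "s \<in> G" "f \<in> inv_ring H"
  shows "act s f \<in> inv_ring H"
proof -
  have HG: "H \<subseteq> G" "matrix_group H" using assms(2) unfolding normal_subgroup_def by auto
  have "act t (act s f) = act s f" if t: "t \<in> H" for t
  proof -
    have tG: "t \<in> G" using t HG by auto
    note si = grp_inv[OF assms(1,3)]
    note ti = grp_inv[OF assms(1) tG]
    let ?u = "matrix_inv s ** t ** s"
    have uH: "?u \<in> H" using assms(2) si t unfolding normal_subgroup_def by metis
    have uG: "?u \<in> G" using uH HG by auto
    have ui: "invertible ?u" using grp_inv[OF assms(1) uG] by simp
    have "s ** ?u = (s ** matrix_inv s) ** t ** s" by (simp add: matrix_mul_assoc)
    also have "\<dots> = t ** s" using inv_props[OF si(1)] by (simp add: matrix_mul_lid)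
    finally have e: "t ** s = s ** ?u" by simp
    have "act t (act s f) = act (s ** ?u) f" using act_act[OF si(1) ti(1)] e by simp
    also have "\<dots> = act s (act ?u f)" using act_act[OF ui si(1)] by simp
    also have "act ?u f = f" using assms(4) uH unfolding inv_ring_def by auto
    finally show ?thesis .
  qed
  moreover have "act s f \<in> polyfun" using assms(4) act_polyfun inv_sub by blast
  ultimately show ?thesis unfolding inv_ring_def by auto
qed

lemma reynolds_inv:
  assumes "finite G" "matrix_group G" "h \<in> polyfun"
  shows "reynolds G h \<in> inv_ring G"
proof -
  let ?c = "1 / real (card G)"
  have sP: "(\<lambda>x. \<Sum>s\<in>G. act s h x) \<in> polyfun"
    using subr_sum[OF subr_polyfun assms(1), of "\<lambda>s. act s h"] act_polyfun[OF assms(3)] by simp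
  have "reynolds G h \<in> polyfun" unfolding reynolds_def
    using polyfun.mult[OF polyfun.const sP, of ?c] by simp
  moreover have "act t (reynolds G h) = reynolds G h" if t: "t \<in> G" for t
  proof -
    note ti = grp_inv[OF assms(2) t]
    have bij: "bij_betw (\<lambda>s. t ** s) G G"
    proof (rule bij_betwI[where g = "\<lambda>s. matrix_inv t ** s"])
      show "(\<lambda>s. t ** s) \<in> G \<rightarrow> G" using assms(2) t unfolding matrix_group_def by auto
      show "(\<lambda>s. matrix_inv t ** s) \<in> G \<rightarrow> G" using assms(2) ti unfolding matrix_group_def by auto
      show "matrix_inv t ** (t ** x) = x" for x
        using inv_props[OF ti(1)] by (metis matrix_mul_assoc matrix_mul_lid)
      show "t ** (matrix_inv t ** y) = y" for y
        using inv_props[OF ti(1)] by (metis matrix_mul_assoc matrix_mul_lid)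
    qed
    have "act t (reynolds G h) x = reynolds G h x" for x
    proof -
      have "act t (reynolds G h) x = ?c * (\<Sum>s\<in>G. act t (act s h) x)"
        by (simp add: act_def reynolds_def)
      also have "(\<Sum>s\<in>G. act t (act s h) x) = (\<Sum>s\<in>G. act (t ** s) h x)"
        using act_act[OF _ ti(1)] grp_inv(1)[OF assms(2)] by (intro sum.cong) auto
      also have "(\<Sum>s\<in>G. act (t ** s) h x) = (\<Sum>s\<in>G. act s h x)"
        using sum.reindex_bij_betw[OF bij, of "\<lambda>s. act s h x"] by simp
      finally show ?thesis by (simp add: reynolds_def)
    qed
    then show ?thesis by (simp add: fun_eq_iff)
  qed
  ultimately show ?thesis unfolding inv_ring_def by auto
qed

lemma hom_mono: "ring_hom_on B \<psi> \<Longrightarrow> A \<subseteq> B \<Longrightarrow> ring_hom_on A \<psi>"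
  unfolding ring_hom_on_def by blast

lemma hom_comp:
  assumes "ring_hom_on A \<psi>" "\<forall>f\<in>B. act s f \<in> A"
  shows "ring_hom_on B (\<lambda>f. \<psi> (act s f))"
proof -
  have P: "\<forall>a\<in>A. \<forall>b\<in>A. \<psi> (\<lambda>x. a x + b x) = \<psi> a + \<psi> b"
    and M: "\<forall>a\<in>A. \<forall>b\<in>A. \<psi> (\<lambda>x. a x * b x) = \<psi> a * \<psi> b"
    and O: "\<psi> (\<lambda>x. 1) = 1" using assms(1) unfolding ring_hom_on_def by auto
  have "\<psi> (act s (\<lambda>x. a x + b x)) = \<psi> (act s a) + \<psi> (act s b) \<and>
        \<psi> (act s (\<lambda>x. a x * b x)) = \<psi> (act s a) * \<psi> (act s b)" if "a \<in> B" "b \<in> B" for a b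
  proof -
    have aA: "act s a \<in> A" and bA: "act s b \<in> A" using assms(2) that by auto
    have e1: "act s (\<lambda>x. a x + b x) = (\<lambda>x. act s a x + act s b x)"
     and e2: "act s (\<lambda>x. a x * b x) = (\<lambda>x. act s a x * act s b x)" by (simp_all add: act_def)
    show ?thesis unfolding e1 e2 using P[rule_format, OF aA bA] M[rule_format, OF aA bA] by simp
  qed
  moreover have "act s (\<lambda>x. 1) = (\<lambda>x. 1)" by (simp add: act_def)
  ultimately show ?thesis using O unfolding ring_hom_on_def by simp
qed

theorem lemma3p15:
  fixes G H :: "(real^'n^'n) set" and k :: nat
    and g :: "nat \<Rightarrow> (real^'n \<Rightarrow> real)" and h :: "real^'n \<Rightarrow> real"
  assumes "finite G" and "matrix_group G" and "normal_subgroup H G"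
    and "\<forall>i<k. g i \<in> inv_ring G"
    and "\<forall>\<phi>. ring_hom_on (inv_ring G) \<phi> \<longrightarrow>
           (extends_hom (inv_ring G) (inv_ring H) \<phi> \<longleftrightarrow> (\<forall>i<k. \<phi> (g i) \<ge> 0))"
    and "h \<in> inv_ring H"
    and "\<forall>\<phi>. ring_hom_on (inv_ring H) \<phi> \<longrightarrow>
           (extends_hom (inv_ring H) polyfun \<phi> \<longleftrightarrow> \<phi> h \<ge> 0)"
  shows "\<forall>\<phi>. ring_hom_on (inv_ring G) \<phi> \<longrightarrow>
           (extends_hom (inv_ring G) polyfun \<phi> \<longleftrightarrow>
              \<phi> (reynolds G h) \<ge> 0 \<and> (\<forall>i<k. \<phi> (g i) \<ge> 0))"
proof (intro allI impI)
  fix \<phi> assume phi: "ring_hom_on (inv_ring G) \<phi>"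
  have HG: "H \<subseteq> G" using assms(3) unfolding normal_subgroup_def by auto
  have GH: "inv_ring G \<subseteq> inv_ring H" using inv_anti[OF HG] .
  have Gne: "G \<noteq> {}" using assms(2) unfolding matrix_group_def by auto
  have hP: "h \<in> polyfun" using assms(6) inv_sub by blast
  have RG: "reynolds G h \<in> inv_ring G" using reynolds_inv[OF assms(1,2) hP] .
  show "extends_hom (inv_ring G) polyfun \<phi> \<longleftrightarrow>
              \<phi> (reynolds G h) \<ge> 0 \<and> (\<forall>i<k. \<phi> (g i) \<ge> 0)"
  proof
    assume "extends_hom (inv_ring G) polyfun \<phi>"
    then obtain \<Phi> where Phi: "ring_hom_on polyfun \<Phi>" "\<forall>a\<in>inv_ring G. \<Phi> a = \<phi> a"
      unfolding extends_hom_def by blast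
    have "extends_hom (inv_ring G) (inv_ring H) \<phi>"
      unfolding extends_hom_def using hom_mono[OF Phi(1) inv_sub] Phi(2) by blast
    then have gi: "\<forall>i<k. \<phi> (g i) \<ge> 0" using assms(5) phi by blast
    have each: "\<Phi> (act s h) \<ge> 0" for s
    proof -
      have c: "ring_hom_on polyfun (\<lambda>f. \<Phi> (act s f))"
        using hom_comp[OF Phi(1)] act_polyfun by blast
      have "extends_hom (inv_ring H) polyfun (\<lambda>f. \<Phi> (act s f))"
        unfolding extends_hom_def using c by blast
      then show ?thesis using assms(7) hom_mono[OF c inv_sub] by blast
    qed
    have "\<phi> (reynolds G h) = \<Phi> (reynolds G h)" using Phi(2) RG by simp
    also have "\<dots> = (1 / real (card G)) * (\<Sum>s\<in>G. \<Phi> (act s h))"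
      using hom_reynolds[OF Phi(1) subr_polyfun assms(1) Gne] act_polyfun[OF hP] by blast
    also have "\<dots> \<ge> 0" using each by (simp add: sum_nonneg)
    finally show "\<phi> (reynolds G h) \<ge> 0 \<and> (\<forall>i<k. \<phi> (g i) \<ge> 0)" using gi by simp
  next
    assume A: "\<phi> (reynolds G h) \<ge> 0 \<and> (\<forall>i<k. \<phi> (g i) \<ge> 0)"
    then have "extends_hom (inv_ring G) (inv_ring H) \<phi>" using assms(5) phi by blast
    then obtain \<psi> where psi: "ring_hom_on (inv_ring H) \<psi>" "\<forall>a\<in>inv_ring G. \<psi> a = \<phi> a"
      unfolding extends_hom_def by blast
    have actH: "\<forall>s\<in>G. act s h \<in> inv_ring H"
      using act_normal[OF assms(2,3) _ assms(6)] by blast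
    have "0 \<le> \<phi> (reynolds G h)" using A by simp
    also have "\<dots> = \<psi> (reynolds G h)" using psi(2) RG by simp
    also have "\<dots> = (1 / real (card G)) * (\<Sum>s\<in>G. \<psi> (act s h))"
      using hom_reynolds[OF psi(1) subr_inv assms(1) Gne actH] .
    finally have f: "0 \<le> (1 / real (card G)) * (\<Sum>s\<in>G. \<psi> (act s h))" .
    have "card G > 0" using Gne assms(1) card_gt_0_iff by blast
    then have "0 \<le> (\<Sum>s\<in>G. \<psi> (act s h))" using f by (simp add: zero_le_divide_iff)
    moreover have "(\<Sum>s\<in>G. \<psi> (act s h)) < (\<Sum>s\<in>G. 0)"
      if "\<forall>s\<in>G. \<psi> (act s h) < 0"
      using sum_strict_mono[OF assms(1) Gne, of "\<lambda>s. \<psi> (act s h)" "\<lambda>s. 0"] that by blast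
    ultimately obtain s where s: "s \<in> G" "\<psi> (act s h) \<ge> 0"
      by force
    have c: "ring_hom_on (inv_ring H) (\<lambda>f. \<psi> (act s f))"
      using hom_comp[OF psi(1)] act_normal[OF assms(2,3) s(1)] by blast
    then have "extends_hom (inv_ring H) polyfun (\<lambda>f. \<psi> (act s f))"
      using assms(7) s(2) by blast
    then obtain \<Phi> where Phi: "ring_hom_on polyfun \<Phi>" "\<forall>a\<in>inv_ring H. \<Phi> a = \<psi> (act s a)"
      unfolding extends_hom_def by blast
    have "\<Phi> a = \<phi> a" if a: "a \<in> inv_ring G" for a
    proof -
      have "act s a = a" using a s(1) unfolding inv_ring_def by auto
      then show ?thesis using Phi(2) psi(2) a GH by auto
    qed
    then show "extends_hom (inv_ring G) polyfun \<phi>"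
      unfolding extends_hom_def using Phi(1) by blast
  qed
qed

end
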